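(* Let $N\ge 1$ and $-\infty<a_i\le b_i<\infty$ with $r_i=(b_i-a_i)/2>0$ for all $i$; set $m_i=(a_i+b_i)/2$, $\Theta=\prod_{i=1}^N[a_i,b_i]$, $T(y)=\sum_{i=1}^N y_i$. Let $p$ be a sampling design with inclusion probabilities $\pi_i=\mathbb P_p(i\in S)>0$ for all $i$, and suppose $\mathbb P_p(i\in S,\ j\in S)=\pi_i\pi_j$ for every pair $i\ne j$. Then \[ \inf_{\delta}\sup_{y\in\Theta}R(\delta,p;y)=\sum_{i=1}^N r_i^2\,\frac{1-\pi_i}{\pi_i}, \] where the infimum is over all unbiased estimators, and the infimum is attained by $\widehat T(y_S)=\sum_{i=1}^N m_i+\sum_{i\in S}\frac{y_i-m_i}{\pi_i}$.
   Context: A sampling design is a probability distribution $p$ on the subsets $s\subseteq\{1,\dots,N\}$; $S$ denotes the random sample drawn from $p$, $\mathbb P_p$ and $\mathbb E_p$ denote probability and expectation with respect to $p$. An estimator $\delta$ is a collection of measurable functions $\delta_s:\Theta_s\to\mathbb R$, one for each subset $s$, where $\Theta_s=\prod_{i\in s}[a_i,b_i]$; for $y\in\Theta$ write $y_s=(y_i)_{i\in s}$. The estimator is unbiased if $\mathbb E_p[\delta_S(y_S)]=T(y)$ for all $y\in\Theta$. The risk is $R(\delta,p;y)=\mathbb E_p[(\delta_S(y_S)-T(y))^2]$. *)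

theory Defs
  imports "HOL-Probability.Probability"
begin

text \<open>Population indices are {1..N}; y :: nat \<Rightarrow> real (values outside {1..N} irrelevant). An estimator is a family
  delta s, each measurable on Theta_s = prod_{i in s} [a i, b i] (as a PiM space of
  extensional functions); it is applied to y_s = restrict y s.\<close>

definition Theta :: "nat \<Rightarrow> (nat \<Rightarrow> real) \<Rightarrow> (nat \<Rightarrow> real) \<Rightarrow> (nat \<Rightarrow> real) set" where
  "Theta N a b = {y. \<forall>i\<in>{1..N}. a i \<le> y i \<and> y i \<le> b i}"

definition total :: "nat \<Rightarrow> (nat \<Rightarrow> real) \<Rightarrow> real" where
  "total N y = (\<Sum>i=1..N. y i)"

definition incl_prob :: "nat set pmf \<Rightarrow> nat \<Rightarrow> real" where
  "incl_prob p i = measure_pmf.prob p {s. i \<in> s}"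

definition is_estimator ::
  "nat \<Rightarrow> (nat \<Rightarrow> real) \<Rightarrow> (nat \<Rightarrow> real) \<Rightarrow> (nat set \<Rightarrow> (nat \<Rightarrow> real) \<Rightarrow> real) \<Rightarrow> bool" where
  "is_estimator N a b \<delta> =
     (\<forall>s. s \<subseteq> {1..N} \<longrightarrow>
        \<delta> s \<in> borel_measurable (PiM s (\<lambda>i. restrict_space borel {a i..b i})))"

definition risk ::
  "nat \<Rightarrow> nat set pmf \<Rightarrow> (nat set \<Rightarrow> (nat \<Rightarrow> real) \<Rightarrow> real) \<Rightarrow> (nat \<Rightarrow> real) \<Rightarrow> real" where
  "risk N p \<delta> y = measure_pmf.expectation p (\<lambda>s. (\<delta> s (restrict y s) - total N y)\<^sup>2)"

definition unbiased ::
  "nat \<Rightarrow> (nat \<Rightarrow> real) \<Rightarrow> (nat \<Rightarrow> real) \<Rightarrow> nat set pmf \<Rightarrow> (nat set \<Rightarrow> (nat \<Rightarrow> real) \<Rightarrow> real) \<Rightarrow> bool" where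
  "unbiased N a b p \<delta> =
     (is_estimator N a b \<delta> \<and>
      (\<forall>y\<in>Theta N a b. measure_pmf.expectation p (\<lambda>s. \<delta> s (restrict y s)) = total N y))"

definition ht_est ::
  "nat \<Rightarrow> (nat \<Rightarrow> real) \<Rightarrow> (nat \<Rightarrow> real) \<Rightarrow> nat set pmf \<Rightarrow> nat set \<Rightarrow> (nat \<Rightarrow> real) \<Rightarrow> real" where
  "ht_est N a b p s ys =
     (\<Sum>i=1..N. (a i + b i) / 2) + (\<Sum>i\<in>s. (ys i - (a i + b i) / 2) / incl_prob p i)"

end

theory Submission
  imports Defs
begin
lemma exp_fin:
  assumes "set_pmf p \<subseteq> Pow {1..N}"
  shows "measure_pmf.expectation p f = (\<Sum>s\<in>Pow {1..(N::nat)}. pmf p s * f s)"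
  using integral_measure_pmf[of "Pow {1..N}" p f] assms by auto


lemma prob_fin:
  assumes "set_pmf p \<subseteq> Pow {1..N}"
  shows "measure_pmf.prob p A = (\<Sum>s\<in>Pow {1..(N::nat)}. pmf p s * (if s \<in> A then 1 else 0))"
proof -
  have "measure_pmf.prob p A = measure_pmf.expectation p (indicator A)" by simp
  also have "\<dots> = (\<Sum>s\<in>Pow {1..(N::nat)}. pmf p s * (if s \<in> A then 1 else 0))"
    using exp_fin[OF assms, of "indicator A"] by (auto simp: indicator_def sum.inter_restrict intro!: sum.cong)
  finally show ?thesis .
qed


lemma wsum1:
  assumes "set_pmf p \<subseteq> Pow {1..N}"
  shows "(\<Sum>s\<in>Pow {1..(N::nat)}. pmf p s) = 1"
  using exp_fin[OF assms, of "\<lambda>_. 1"] by simp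


lemma bessel:
  fixes D :: "'e \<Rightarrow> real" and u :: "'i \<Rightarrow> 'e \<Rightarrow> real"
  assumes "finite E" "finite I" "K > 0"
    and orth: "\<And>i j. i\<in>I \<Longrightarrow> j\<in>I \<Longrightarrow> (\<Sum>e\<in>E. u i e * u j e) = (if i = j then K else 0)"
  shows "(\<Sum>i\<in>I. (\<Sum>e\<in>E. D e * u i e)^2) / K \<le> (\<Sum>e\<in>E. (D e)^2)"
proof -
  define c where "c i = (\<Sum>e\<in>E. D e * u i e) / K" for i
  have cK: "(\<Sum>e\<in>E. D e * u i e) = c i * K" for i using assms(3) by (simp add: c_def)
  have pe: "(D e - (\<Sum>i\<in>I. c i * u i e))^2 = (D e)^2 - 2 * (\<Sum>i\<in>I. c i * (D e * u i e))
      + (\<Sum>i\<in>I. \<Sum>j\<in>I. c i * c j * (u i e * u j e))" for e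
  proof -
    have "(\<Sum>i\<in>I. c i * u i e)^2 = (\<Sum>i\<in>I. \<Sum>j\<in>I. c i * c j * (u i e * u j e))"
      by (simp add: power2_eq_square sum_product algebra_simps)
    moreover have "D e * (\<Sum>i\<in>I. c i * u i e) = (\<Sum>i\<in>I. c i * (D e * u i e))"
      by (simp add: sum_distrib_left algebra_simps)
    ultimately show ?thesis by (simp add: power2_diff)
  qed
  have "0 \<le> (\<Sum>e\<in>E. (D e - (\<Sum>i\<in>I. c i * u i e))^2)" by (simp add: sum_nonneg)
  also have "\<dots> = (\<Sum>e\<in>E. (D e)^2) - 2 * (\<Sum>i\<in>I. c i * (\<Sum>e\<in>E. D e * u i e))
      + (\<Sum>i\<in>I. \<Sum>j\<in>I. c i * c j * (\<Sum>e\<in>E. u i e * u j e))"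
  proof -
    have s1: "(\<Sum>e\<in>E. \<Sum>i\<in>I. \<Sum>j\<in>I. c i * c j * (u i e * u j e)) = (\<Sum>i\<in>I. \<Sum>j\<in>I. c i * c j * (\<Sum>e\<in>E. u i e * u j e))"
      by (simp only: sum_distrib_left) (subst sum.swap, rule sum.cong[OF refl], rule sum.swap)
    have s2: "(\<Sum>e\<in>E. \<Sum>i\<in>I. c i * (D e * u i e)) = (\<Sum>i\<in>I. c i * (\<Sum>e\<in>E. D e * u i e))"
      by (simp only: sum_distrib_left) (rule sum.swap)
    show ?thesis unfolding pe by (simp add: sum.distrib sum_subtractf s1 s2 sum_distrib_left[symmetric])
  qed
  also have "\<dots> = (\<Sum>e\<in>E. (D e)^2) - K * (\<Sum>i\<in>I. (c i)^2)"
  proof -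
    have "(\<Sum>i\<in>I. \<Sum>j\<in>I. c i * c j * (\<Sum>e\<in>E. u i e * u j e)) = (\<Sum>i\<in>I. K * (c i)^2)"
    proof (rule sum.cong[OF refl])
      fix i assume i: "i \<in> I"
      have "(\<Sum>j\<in>I. c i * c j * (\<Sum>e\<in>E. u i e * u j e)) = (\<Sum>j\<in>I. if j = i then K * (c i)^2 else 0)"
        by (rule sum.cong[OF refl]) (auto simp: orth i power2_eq_square)
      also have "\<dots> = K * (c i)^2" using i assms(2) by simp
      finally show "(\<Sum>j\<in>I. c i * c j * (\<Sum>e\<in>E. u i e * u j e)) = K * (c i)^2" .
    qed
    moreover have "(\<Sum>i\<in>I. c i * (\<Sum>e\<in>E. D e * u i e)) = (\<Sum>i\<in>I. K * (c i)^2)"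
      by (simp add: cK power2_eq_square mult_ac)
    ultimately show ?thesis by (simp add: sum_distrib_left)
  qed
  finally have "K * (\<Sum>i\<in>I. (c i)^2) \<le> (\<Sum>e\<in>E. (D e)^2)" by simp
  moreover have "(\<Sum>i\<in>I. (\<Sum>e\<in>E. D e * u i e)^2) / K = K * (\<Sum>i\<in>I. (c i)^2)"
  proof -
    have "(\<Sum>i\<in>I. (\<Sum>e\<in>E. D e * u i e)^2) / K = (\<Sum>i\<in>I. K * (c i)^2)"
      unfolding sum_divide_distrib using assms(3) by (intro sum.cong) (auto simp: cK power2_eq_square)
    then show ?thesis by (simp add: sum_distrib_left)
  qed
  ultimately show ?thesis by simp
qed


lemma flip_sum:
  fixes F :: "(nat \<Rightarrow> real) \<Rightarrow> real"
  assumes "i \<in> I"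
    and inv: "\<And>e. e \<in> PiE I (\<lambda>_. {-1,1::real}) \<Longrightarrow> F (e(i := - e i)) = F e"
  shows "(\<Sum>e\<in>PiE I (\<lambda>_. {-1,1::real}). F e * e i) = 0"
proof -
  let ?E = "PiE I (\<lambda>_. {-1,1::real})"
  have "(\<Sum>e\<in>?E. F e * e i) = (\<Sum>e\<in>?E. F (e(i := - e i)) * (e(i := - e i)) i)"
    by (rule sum.reindex_bij_witness[where i="\<lambda>e. e(i := - e i)" and j="\<lambda>e. e(i := - e i)"])
       (use assms(1) in \<open>auto simp: PiE_iff extensional_def\<close>)
  also have "\<dots> = - (\<Sum>e\<in>?E. F e * e i)" using inv by (simp add: sum_negf[symmetric])
  finally show ?thesis by simp
qed


lemma cs_lemma:
  fixes w G ind :: "'s \<Rightarrow> real"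
  assumes "finite P" "\<And>s. s\<in>P \<Longrightarrow> w s \<ge> 0" "(\<Sum>s\<in>P. w s) = 1"
    "(\<Sum>s\<in>P. w s * ind s) = q" "q > 0" "\<And>s. s\<in>P \<Longrightarrow> ind s * ind s = ind s"
    "\<And>s. s\<in>P \<Longrightarrow> G s = ind s * G s" "(\<Sum>s\<in>P. w s * G s) = R"
  shows "R^2 * (1 - q) / q \<le> (\<Sum>s\<in>P. w s * (G s - R)^2)"
proof -
  define t where "t = R / q"
  have pt: "w s * (G s - t * ind s)^2 = w s * (G s)^2 - 2 * t * (w s * G s) + t^2 * (w s * ind s)"
    if s: "s \<in> P" for s
  proof -
    have "(G s - t * ind s)^2 = (G s)^2 - 2 * t * (ind s * G s) + t^2 * (ind s * ind s)"
      by (simp add: power2_eq_square algebra_simps)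
    also have "\<dots> = (G s)^2 - 2 * t * G s + t^2 * ind s"
      using assms(6)[OF s] assms(7)[OF s] by (simp only:)
    finally have h: "(G s - t * ind s)^2 = (G s)^2 - 2 * t * G s + t^2 * ind s" .
    show ?thesis unfolding h by (simp add: algebra_simps)
  qed
  have A: "(\<Sum>s\<in>P. w s * (G s - t * ind s)^2) = (\<Sum>s\<in>P. w s * (G s)^2) - 2 * t * R + t^2 * q"
    using assms(4,8) by (simp add: pt sum.distrib sum_subtractf sum_distrib_left[symmetric])
  have "0 \<le> (\<Sum>s\<in>P. w s * (G s - t * ind s)^2)" using assms(2) by (simp add: sum_nonneg)
  moreover have "2 * t * R - t^2 * q = R^2 / q" using assms(5) by (simp add: t_def field_simps power2_eq_square)
  ultimately have B: "R^2 / q \<le> (\<Sum>s\<in>P. w s * (G s)^2)" unfolding A by linarith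
  have pc: "w s * (G s - R)^2 = w s * (G s)^2 - 2 * R * (w s * G s) + R^2 * w s" for s
    by (simp add: power2_eq_square algebra_simps)
  have C: "(\<Sum>s\<in>P. w s * (G s - R)^2) = (\<Sum>s\<in>P. w s * (G s)^2) - 2 * R * R + R^2"
    using assms(3,8) by (simp add: pc sum.distrib sum_subtractf sum_distrib_left[symmetric])
  have "R^2 * (1 - q) / q = R^2 / q - R^2" using assms(5) by (simp add: field_simps)
  then show ?thesis unfolding C using B by (simp add: power2_eq_square)
qed



lemma sum_subset_ind:
  assumes "s \<subseteq> {1..(N::nat)}"
  shows "(\<Sum>i\<in>s. f i) = (\<Sum>i=1..N. (if i \<in> s then 1 else 0) * (f i :: real))"
proof -
  have "(\<Sum>i\<in>s. f i) = (\<Sum>i\<in>{1..N} \<inter> s. f i)" using assms by (simp add: Int_absorb1)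
  also have "\<dots> = (\<Sum>i=1..N. (if i \<in> s then 1 else 0) * f i)"
    by (simp add: sum.inter_restrict) (rule sum.cong, auto)
  finally show ?thesis .
qed

lemma expand_quad:
  fixes w :: "'s \<Rightarrow> real" and z :: "'i \<Rightarrow> real"
  shows "(\<Sum>s\<in>P. w s * (\<Sum>i\<in>I. z i * q i s)^2) = (\<Sum>i\<in>I. \<Sum>j\<in>I. z i * z j * (\<Sum>s\<in>P. w s * (q i s * q j s)))"
proof -
  have "(\<Sum>s\<in>P. w s * (\<Sum>i\<in>I. z i * q i s)^2) = (\<Sum>s\<in>P. \<Sum>i\<in>I. \<Sum>j\<in>I. z i * z j * (w s * (q i s * q j s)))"
    by (rule sum.cong[OF refl]) (simp add: power2_eq_square sum_product sum_distrib_left mult_ac)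
  also have "\<dots> = (\<Sum>i\<in>I. \<Sum>j\<in>I. z i * z j * (\<Sum>s\<in>P. w s * (q i s * q j s)))"
    by (simp only: sum_distrib_left) (subst sum.swap, rule sum.cong[OF refl], rule sum.swap)
  finally show ?thesis .
qed

lemma pi_eq:
  assumes "set_pmf p \<subseteq> Pow {1..N}"
  shows "incl_prob p i = (\<Sum>s\<in>Pow {1..(N::nat)}. pmf p s * (if i \<in> s then 1 else 0))"
  unfolding incl_prob_def using prob_fin[OF assms, of "{s. i \<in> s}"] by simp

lemma pair_eq:
  assumes "set_pmf p \<subseteq> Pow {1..N}"
  shows "measure_pmf.prob p {s. i \<in> s \<and> j \<in> s} = (\<Sum>s\<in>Pow {1..(N::nat)}. pmf p s * ((if i \<in> s then 1 else 0) * (if j \<in> s then 1 else 0)))"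
  using prob_fin[OF assms, of "{s. i \<in> s \<and> j \<in> s}"] by (auto intro!: sum.cong)

lemma ht_measurable:
  "ht_est N a b p s \<in> borel_measurable (PiM s (\<lambda>i. restrict_space borel {a i..b i}))"
  unfolding ht_est_def
  apply (intro borel_measurable_add borel_measurable_const borel_measurable_sum borel_measurable_divide borel_measurable_diff)
  apply (rule measurable_compose[OF measurable_component_singleton], assumption)
  apply (rule measurable_restrict_space1)
  apply simp
  done



lemma ht_err:
  assumes s: "s \<subseteq> {1..(N::nat)}"
  shows "ht_est N a b p s (restrict y s) - total N y =
    (\<Sum>i=1..N. (y i - (a i + b i) / 2) * ((if i \<in> s then 1 else 0) / incl_prob p i - 1))"
proof -
  have "(\<Sum>i\<in>s. (restrict y s i - (a i + b i) / 2) / incl_prob p i)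
      = (\<Sum>i\<in>s. (y i - (a i + b i) / 2) / incl_prob p i)" by simp
  also have "\<dots> = (\<Sum>i=1..N. (if i \<in> s then 1 else 0) * ((y i - (a i + b i) / 2) / incl_prob p i))"
    by (rule sum_subset_ind[OF s])
  finally have e: "(\<Sum>i\<in>s. (restrict y s i - (a i + b i) / 2) / incl_prob p i) = \<dots>" .
  have t: "m + d * ((yy - m) / pp) - yy = (yy - m) * (d / pp - 1)" for m d yy pp :: real
    by (cases "pp = 0") (simp_all add: field_simps)
  show ?thesis unfolding ht_est_def total_def e
    by (simp only: sum.distrib[symmetric] sum_subtractf[symmetric] t)
qed

lemma ht_unbiased_exp:
  assumes sp: "set_pmf p \<subseteq> Pow {1..N}" and pos: "\<forall>i\<in>{1..N}. incl_prob p i > 0"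
  shows "measure_pmf.expectation p (\<lambda>s. ht_est N a b p s (restrict y s)) = total N y"
proof -
  let ?P = "Pow {1..N}"
  let ?z = "\<lambda>i. y i - (a i + b i) / 2"
  let ?q = "\<lambda>i s. (if i \<in> s then 1 else 0) / incl_prob p i - (1::real)"
  have "measure_pmf.expectation p (\<lambda>s. ht_est N a b p s (restrict y s) - total N y)
      = (\<Sum>s\<in>?P. pmf p s * (\<Sum>i=1..N. ?z i * ?q i s))"
    unfolding exp_fin[OF sp] by (rule sum.cong[OF refl]) (simp add: ht_err)
  also have "\<dots> = (\<Sum>i=1..N. ?z i * (\<Sum>s\<in>?P. pmf p s * ?q i s))"
    by (simp only: sum_distrib_left mult_ac) (rule sum.swap)
  also have "\<dots> = 0"
  proof (rule sum.neutral, rule ballI)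
    fix i assume i: "i \<in> {1..N}"
    have "(\<Sum>s\<in>?P. pmf p s * ?q i s) = (\<Sum>s\<in>?P. pmf p s * (if i \<in> s then 1 else 0)) / incl_prob p i - (\<Sum>s\<in>?P. pmf p s)"
      by (simp add: right_diff_distrib sum_subtractf sum_divide_distrib)
    also have "\<dots> = 0"
    proof -
      have pi: "incl_prob p i > 0" using pos i by auto
      have h: "(\<Sum>s\<in>?P. pmf p s * (if i \<in> s then 1 else 0)) = incl_prob p i" by (rule pi_eq[OF sp, symmetric])
      show ?thesis unfolding h wsum1[OF sp] using pi by simp
    qed
    finally show "?z i * (\<Sum>s\<in>?P. pmf p s * ?q i s) = 0" by simp
  qed
  finally have "measure_pmf.expectation p (\<lambda>s. ht_est N a b p s (restrict y s) - total N y) = 0" .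
  moreover have "measure_pmf.expectation p (\<lambda>s. ht_est N a b p s (restrict y s) - total N y)
     = measure_pmf.expectation p (\<lambda>s. ht_est N a b p s (restrict y s)) - total N y"
    unfolding exp_fin[OF sp] using wsum1[OF sp]
    by (simp add: right_diff_distrib sum_subtractf sum_distrib_right[symmetric])
  ultimately show ?thesis by simp
qed

lemma lin4:
  fixes w X Y Z :: "'s \<Rightarrow> real"
  shows "(\<Sum>s\<in>P. w s * (X s / c1 - Y s / c2 - Z s / c3 + 1)) = (\<Sum>s\<in>P. w s * X s)/c1 - (\<Sum>s\<in>P. w s * Y s)/c2 - (\<Sum>s\<in>P. w s * Z s)/c3 + (\<Sum>s\<in>P. w s)"
  by (simp add: sum.distrib sum_subtractf sum_divide_distrib algebra_simps)

lemma ht_risk: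
  assumes sp: "set_pmf p \<subseteq> Pow {1..N}" and pos: "\<forall>i\<in>{1..N}. incl_prob p i > 0"
    and ind: "\<forall>i\<in>{1..N}. \<forall>j\<in>{1..N}. i \<noteq> j \<longrightarrow>
           measure_pmf.prob p {s. i \<in> s \<and> j \<in> s} = incl_prob p i * incl_prob p j"
  shows "risk N p (ht_est N a b p) y = (\<Sum>i=1..N. (y i - (a i + b i) / 2)^2 * (1 - incl_prob p i) / incl_prob p i)"
proof -
  let ?P = "Pow {1..N}"
  let ?z = "\<lambda>i. y i - (a i + b i) / 2"
  let ?d = "\<lambda>i s. (if i \<in> s then 1 else 0::real)"
  let ?q = "\<lambda>i s. ?d i s / incl_prob p i - (1::real)"
  have "risk N p (ht_est N a b p) y = (\<Sum>s\<in>?P. pmf p s * (\<Sum>i=1..N. ?z i * ?q i s)^2)"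
    unfolding risk_def exp_fin[OF sp] by (rule sum.cong[OF refl]) (simp add: ht_err)
  also have "\<dots> = (\<Sum>i=1..N. \<Sum>j=1..N. ?z i * ?z j * (\<Sum>s\<in>?P. pmf p s * (?q i s * ?q j s)))"
    by (rule expand_quad)
  also have "\<dots> = (\<Sum>i=1..N. \<Sum>j=1..N. if j = i then ?z i * ?z i * (1 / incl_prob p i - 1) else 0)"
  proof (intro sum.cong[OF refl])
    fix i j assume i: "i \<in> {1..N}" and j: "j \<in> {1..N}"
    have qq: "?q i s * ?q j s = (?d i s * ?d j s) / (incl_prob p i * incl_prob p j) - ?d i s / incl_prob p i
        - ?d j s / incl_prob p j + 1" for s
    proof -
      have "incl_prob p i > 0" "incl_prob p j > 0" using pos i j by auto
      then show ?thesis by (simp add: field_simps)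
    qed
    have M: "(\<Sum>s\<in>?P. pmf p s * (?q i s * ?q j s)) =
       (\<Sum>s\<in>?P. pmf p s * (?d i s * ?d j s)) / (incl_prob p i * incl_prob p j) - 1 - 1 + 1"
    proof -
      have pi: "incl_prob p i > 0" "incl_prob p j > 0" using pos i j by auto
      have hi: "(\<Sum>s\<in>?P. pmf p s * ?d i s) = incl_prob p i" by (rule pi_eq[OF sp, symmetric])
      have hj: "(\<Sum>s\<in>?P. pmf p s * ?d j s) = incl_prob p j" by (rule pi_eq[OF sp, symmetric])
      show ?thesis unfolding qq lin4 hi hj wsum1[OF sp] using pi by simp
    qed
    show "?z i * ?z j * (\<Sum>s\<in>?P. pmf p s * (?q i s * ?q j s)) = (if j = i then ?z i * ?z i * (1 / incl_prob p i - 1) else 0)"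
    proof (cases "j = i")
      case True
      have "(\<Sum>s\<in>?P. pmf p s * (?d i s * ?d i s)) = incl_prob p i"
        unfolding pi_eq[OF sp] by (rule sum.cong) auto
      then show ?thesis unfolding M using True pos i by (simp add: field_simps)
    next
      case False
      have "(\<Sum>s\<in>?P. pmf p s * (?d i s * ?d j s)) = incl_prob p i * incl_prob p j"
        using ind i j False pair_eq[OF sp, of i j] by simp
      moreover have "incl_prob p i > 0" "incl_prob p j > 0" using pos i j by auto
      ultimately show ?thesis unfolding M using False by simp
    qed
  qed
  also have "\<dots> = (\<Sum>i=1..N. ?z i * ?z i * (1 / incl_prob p i - 1))" by simp
  also have "\<dots> = (\<Sum>i=1..N. (?z i)^2 * (1 - incl_prob p i) / incl_prob p i)"
  proof (intro sum.cong[OF refl])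
    fix i assume i: "i \<in> {1..N}"
    have t: "zz * zz * (1 / pp - 1) = zz^2 * (1 - pp) / pp" if "pp \<noteq> 0" for zz pp :: real
      using that by (simp add: field_simps power2_eq_square)
    show "?z i * ?z i * (1 / incl_prob p i - 1) = (?z i)^2 * (1 - incl_prob p i) / incl_prob p i"
      using pos i by (intro t) fastforce
  qed
  finally show ?thesis .
qed



lemma lower_bound:
  assumes sp: "set_pmf p \<subseteq> Pow {1..N}" and pos: "\<forall>i\<in>{1..N}. incl_prob p i > 0"
    and ab: "\<forall>i\<in>{1..N}. a i \<le> b i \<and> (b i - a i) / 2 > 0"
    and unb: "unbiased N a b p \<delta>"
  shows "\<exists>y\<in>Theta N a b. (\<Sum>i=1..N. ((b i - a i) / 2)\<^sup>2 * (1 - incl_prob p i) / incl_prob p i) \<le> risk N p \<delta> y"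
proof -
  define E where "E = PiE {1..N} (\<lambda>_. {-1,1::real})"
  define K where "K = real (card E)"
  define r where "r i = (b i - a i) / 2" for i
  define V where "V = (\<Sum>i=1..N. (r i)\<^sup>2 * (1 - incl_prob p i) / incl_prob p i)"
  define yv where "yv e = (\<lambda>i. (a i + b i) / 2 + r i * e i)" for e :: "nat \<Rightarrow> real"
  define g where "g s e = \<delta> s (restrict (yv e) s)" for s e
  define G where "G s i = (\<Sum>e\<in>E. g s e * e i)" for s i
  let ?P = "Pow {1..N}"
  let ?d = "\<lambda>i s. (if i \<in> s then 1 else 0::real)"
  have finE: "finite E" unfolding E_def by (simp add: finite_PiE)
  have "restrict (\<lambda>_. 1) {1..N} \<in> E" unfolding E_def by auto
  hence neE: "E \<noteq> {}" by auto
  have Kpos: "K > 0" unfolding K_def using finE neE by (simp add: card_gt_0_iff)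
  have Eval: "e i = -1 \<or> e i = 1" if "e \<in> E" "i \<in> {1..N}" for e i
    using that unfolding E_def by (auto simp: PiE_iff)
  have yvT: "yv e \<in> Theta N a b" if e: "e \<in> E" for e
    unfolding Theta_def
  proof (intro CollectI ballI)
    fix i assume i: "i \<in> {1..N}"
    show "a i \<le> yv e i \<and> yv e i \<le> b i"
      using Eval[OF e i] ab i by (auto simp: yv_def r_def field_simps)
  qed
  have totv: "total N (yv e) = (\<Sum>i=1..N. (a i + b i) / 2) + (\<Sum>i=1..N. r i * e i)" for e
    unfolding total_def yv_def by (simp add: sum.distrib)
  have unbv: "(\<Sum>s\<in>?P. pmf p s * g s e) = total N (yv e)" if "e \<in> E" for e
    using unb yvT[OF that] unfolding unbiased_def g_def exp_fin[OF sp] by blast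
  have orth: "(\<Sum>e\<in>E. e i * e j) = (if i = j then K else 0)" if i: "i \<in> {1..N}" and j: "j \<in> {1..N}" for i j
  proof (cases "i = j")
    case True
    have "(\<Sum>e\<in>E. e i * e j) = (\<Sum>e\<in>E. 1)"
    proof (rule sum.cong[OF refl])
      fix x assume "x \<in> E"
      from Eval[OF this i] show "x i * x j = 1" using True by auto
    qed
    then show ?thesis using True by (simp add: K_def)
  next
    case False
    have "(\<Sum>e\<in>E. e j * e i) = 0" unfolding E_def
      by (rule flip_sum[OF i]) (use False in auto)
    then show ?thesis using False by (simp add: mult.commute)
  qed
  have sume: "(\<Sum>e\<in>E. e i) = 0" if i: "i \<in> {1..N}" for i
    using flip_sum[OF i, of "\<lambda>_. 1"] unfolding E_def by simp
  have Ginv: "G s i = 0" if s: "s \<in> ?P" and i: "i \<in> {1..N}" and ni: "i \<notin> s" for s i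
    unfolding G_def E_def
  proof (rule flip_sum[OF i])
    fix e :: "nat \<Rightarrow> real"
    have "restrict (yv (e(i := - e i))) s = restrict (yv e) s"
      using ni by (auto simp: restrict_def yv_def)
    then show "g s (e(i := - e i)) = g s e" by (simp add: g_def)
  qed
  have TE: "(\<Sum>e\<in>E. total N (yv e) * e i) = K * r i" if i: "i \<in> {1..N}" for i
  proof -
    have "(\<Sum>e\<in>E. total N (yv e) * e i) = (\<Sum>e\<in>E. (\<Sum>j=1..N. (a j + b j) / 2) * e i + (\<Sum>j=1..N. r j * (e j * e i)))"
      unfolding totv by (simp add: distrib_right sum_distrib_right mult.assoc)
    also have "\<dots> = (\<Sum>j=1..N. (a j + b j) / 2) * (\<Sum>e\<in>E. e i) + (\<Sum>j=1..N. r j * (\<Sum>e\<in>E. e j * e i))"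
      by (simp add: sum.distrib sum_distrib_left) (rule sum.swap)
    also have "\<dots> = (\<Sum>j=1..N. r j * (if j = i then K else 0))"
      using sume[OF i] orth i by (auto intro!: sum.cong)
    also have "\<dots> = (\<Sum>j=1..N. if j = i then K * r i else 0)"
      by (rule sum.cong) auto
    also have "\<dots> = K * r i" using i by simp
    finally show ?thesis .
  qed
  have unbG: "(\<Sum>s\<in>?P. pmf p s * G s i) = K * r i" if i: "i \<in> {1..N}" for i
  proof -
    have "(\<Sum>s\<in>?P. pmf p s * G s i) = (\<Sum>e\<in>E. (\<Sum>s\<in>?P. pmf p s * g s e) * e i)"
      unfolding G_def by (simp add: sum_distrib_left sum_distrib_right mult.assoc) (rule sum.swap)
    also have "\<dots> = (\<Sum>e\<in>E. total N (yv e) * e i)"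
    proof (rule sum.cong[OF refl])
      fix e assume "e \<in> E"
      show "(\<Sum>s\<in>?P. pmf p s * g s e) * e i = total N (yv e) * e i" using unbv[OF \<open>e \<in> E\<close>] by simp
    qed
    finally show ?thesis using TE[OF i] by simp
  qed
  have DE: "(\<Sum>e\<in>E. (g s e - total N (yv e)) * e i) = G s i - K * r i" if i: "i \<in> {1..N}" for s i
    unfolding G_def using TE[OF i] by (simp add: left_diff_distrib sum_subtractf)
  have step1: "(\<Sum>e\<in>E. risk N p \<delta> (yv e)) = (\<Sum>s\<in>?P. pmf p s * (\<Sum>e\<in>E. (g s e - total N (yv e))^2))"
    unfolding risk_def exp_fin[OF sp] g_def by (simp add: sum_distrib_left) (rule sum.swap)
  have step2: "(\<Sum>s\<in>?P. pmf p s * (\<Sum>i=1..N. (G s i - K * r i)^2) / K) \<le> (\<Sum>s\<in>?P. pmf p s * (\<Sum>e\<in>E. (g s e - total N (yv e))^2))"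
  proof (rule sum_mono)
    fix s assume "s \<in> ?P"
    have "(\<Sum>i=1..N. (\<Sum>e\<in>E. (g s e - total N (yv e)) * e i)^2) / K \<le> (\<Sum>e\<in>E. (g s e - total N (yv e))^2)"
      by (rule bessel[OF finE _ Kpos orth]) simp_all
    also have "(\<Sum>i=1..N. (\<Sum>e\<in>E. (g s e - total N (yv e)) * e i)^2) = (\<Sum>i=1..N. (G s i - K * r i)^2)"
      by (rule sum.cong) (simp_all add: DE)
    finally show "pmf p s * (\<Sum>i=1..N. (G s i - K * r i)^2) / K \<le> pmf p s * (\<Sum>e\<in>E. (g s e - total N (yv e))^2)"
      by (simp add: mult_left_mono pmf_nonneg times_divide_eq_right[symmetric] del: times_divide_eq_right)
  qed
  have step3: "(\<Sum>s\<in>?P. pmf p s * (\<Sum>i=1..N. (G s i - K * r i)^2) / K) = (\<Sum>i=1..N. (\<Sum>s\<in>?P. pmf p s * (G s i - K * r i)^2)) / K"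
    by (simp add: sum_divide_distrib[symmetric] sum_distrib_left) (rule disjI2, rule sum.swap)
  have step4: "(K * r i)^2 * (1 - incl_prob p i) / incl_prob p i \<le> (\<Sum>s\<in>?P. pmf p s * (G s i - K * r i)^2)"
    if i: "i \<in> {1..N}" for i
  proof (rule cs_lemma[where ind = "?d i"])
    show "finite ?P" by simp
    show "\<And>s. s \<in> ?P \<Longrightarrow> 0 \<le> pmf p s" by simp
    show "(\<Sum>s\<in>?P. pmf p s) = 1" by (rule wsum1[OF sp])
    show "(\<Sum>s\<in>?P. pmf p s * ?d i s) = incl_prob p i" by (rule pi_eq[OF sp, symmetric])
    show "incl_prob p i > 0" using pos i by auto
    show "\<And>s. ?d i s * ?d i s = ?d i s" by simp
    show "\<And>s. s \<in> ?P \<Longrightarrow> G s i = ?d i s * G s i" using Ginv i by auto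
    show "(\<Sum>s\<in>?P. pmf p s * G s i) = K * r i" by (rule unbG[OF i])
  qed
  have "K * V = (\<Sum>i=1..N. (K * r i)^2 * (1 - incl_prob p i) / incl_prob p i) / K"
    unfolding V_def using Kpos by (simp add: sum_divide_distrib sum_distrib_left power_mult_distrib power2_eq_square) (rule sum.cong, simp_all add: mult_ac)
  also have "\<dots> \<le> (\<Sum>i=1..N. (\<Sum>s\<in>?P. pmf p s * (G s i - K * r i)^2)) / K"
    using Kpos step4 by (intro divide_right_mono sum_mono) auto
  also have "\<dots> \<le> (\<Sum>e\<in>E. risk N p \<delta> (yv e))" using step1 step2 step3 by simp
  finally have KV: "K * V \<le> (\<Sum>e\<in>E. risk N p \<delta> (yv e))" .
  have "\<exists>e\<in>E. V \<le> risk N p \<delta> (yv e)"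
  proof (rule ccontr)
    assume "\<not> ?thesis"
    hence "\<forall>e\<in>E. risk N p \<delta> (yv e) < V" by auto
    hence "(\<Sum>e\<in>E. risk N p \<delta> (yv e)) < (\<Sum>e\<in>E. V)"
      using finE neE by (intro sum_strict_mono) auto
    also have "\<dots> = K * V" by (simp add: K_def)
    finally show False using KV by simp
  qed
  then obtain e where "e \<in> E" "V \<le> risk N p \<delta> (yv e)" by blast
  then show ?thesis using yvT unfolding V_def r_def by blast
qed


theorem proposition3:
  fixes N :: nat and a b :: "nat \<Rightarrow> real" and p :: "nat set pmf"
  assumes "N \<ge> 1"
    and "\<forall>i\<in>{1..N}. a i \<le> b i \<and> (b i - a i) / 2 > 0"
    and "set_pmf p \<subseteq> Pow {1..N}"
    and "\<forall>i\<in>{1..N}. incl_prob p i > 0"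
    and "\<forall>i\<in>{1..N}. \<forall>j\<in>{1..N}. i \<noteq> j \<longrightarrow>
           measure_pmf.prob p {s. i \<in> s \<and> j \<in> s} = incl_prob p i * incl_prob p j"
  shows "(INF \<delta>\<in>{\<delta>. unbiased N a b p \<delta>}. SUP y\<in>Theta N a b. ereal (risk N p \<delta> y))
           = ereal (\<Sum>i=1..N. ((b i - a i) / 2)\<^sup>2 * (1 - incl_prob p i) / incl_prob p i)
       \<and> unbiased N a b p (ht_est N a b p)
       \<and> (SUP y\<in>Theta N a b. ereal (risk N p (ht_est N a b p) y))
           = ereal (\<Sum>i=1..N. ((b i - a i) / 2)\<^sup>2 * (1 - incl_prob p i) / incl_prob p i)"
proof -
  note ab = assms(2) and sp = assms(3) and pos = assms(4) and ind = assms(5)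
  define V where "V = (\<Sum>i=1..N. ((b i - a i) / 2)\<^sup>2 * (1 - incl_prob p i) / incl_prob p i)"
  have unbHT: "unbiased N a b p (ht_est N a b p)"
    unfolding unbiased_def is_estimator_def using ht_measurable ht_unbiased_exp[OF sp pos] by blast
  have riskle: "risk N p (ht_est N a b p) y \<le> V" if y: "y \<in> Theta N a b" for y
    unfolding ht_risk[OF sp pos ind] V_def
  proof (rule sum_mono)
    fix i assume i: "i \<in> {1..N}"
    have pi: "0 < incl_prob p i" "incl_prob p i \<le> 1" using pos i by (auto simp: incl_prob_def)
    have yi: "a i \<le> y i" "y i \<le> b i" using y i unfolding Theta_def by auto
    have "\<bar>y i - (a i + b i) / 2\<bar> \<le> (b i - a i) / 2" using yi by (auto simp: abs_le_iff field_simps)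
    hence "(y i - (a i + b i) / 2)\<^sup>2 \<le> ((b i - a i) / 2)\<^sup>2"
      using ab i by (subst power2_le_iff_abs_le) auto
    moreover have "0 \<le> (1 - incl_prob p i) / incl_prob p i" using pi by simp
    ultimately have "(y i - (a i + b i) / 2)\<^sup>2 * ((1 - incl_prob p i) / incl_prob p i) \<le> ((b i - a i) / 2)\<^sup>2 * ((1 - incl_prob p i) / incl_prob p i)"
      by (rule mult_right_mono)
    then show "(y i - (a i + b i) / 2)\<^sup>2 * (1 - incl_prob p i) / incl_prob p i \<le> ((b i - a i) / 2)\<^sup>2 * (1 - incl_prob p i) / incl_prob p i"
      by simp
  qed
  have bT: "b \<in> Theta N a b" using ab unfolding Theta_def by auto
  have riskb: "risk N p (ht_est N a b p) b = V"
    unfolding ht_risk[OF sp pos ind] V_def by (rule sum.cong) (simp_all add: field_simps)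
  have SUPeq: "(SUP y\<in>Theta N a b. ereal (risk N p (ht_est N a b p) y)) = ereal V"
  proof (rule antisym)
    show "(SUP y\<in>Theta N a b. ereal (risk N p (ht_est N a b p) y)) \<le> ereal V"
      using riskle by (intro SUP_least) simp
    show "ereal V \<le> (SUP y\<in>Theta N a b. ereal (risk N p (ht_est N a b p) y))"
      using bT riskb by (intro SUP_upper2[OF bT]) simp
  qed
  have INFeq: "(INF \<delta>\<in>{\<delta>. unbiased N a b p \<delta>}. SUP y\<in>Theta N a b. ereal (risk N p \<delta> y)) = ereal V"
  proof (rule antisym)
    show "(INF \<delta>\<in>{\<delta>. unbiased N a b p \<delta>}. SUP y\<in>Theta N a b. ereal (risk N p \<delta> y)) \<le> ereal V"
      using unbHT SUPeq by (intro INF_lower2[of "ht_est N a b p"]) auto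
    show "ereal V \<le> (INF \<delta>\<in>{\<delta>. unbiased N a b p \<delta>}. SUP y\<in>Theta N a b. ereal (risk N p \<delta> y))"
    proof (rule INF_greatest)
      fix \<delta> assume "\<delta> \<in> {\<delta>. unbiased N a b p \<delta>}"
      then obtain y where y: "y \<in> Theta N a b" "V \<le> risk N p \<delta> y"
        using lower_bound[OF sp pos ab] unfolding V_def by blast
      show "ereal V \<le> (SUP y\<in>Theta N a b. ereal (risk N p \<delta> y))"
        using y by (intro SUP_upper2[OF y(1)]) simp
    qed
  qed
  show ?thesis using INFeq SUPeq unbHT unfolding V_def by blast
qed

end
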